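(* Let $L>0$, let $a$ satisfy (H_a), $g\in L^2(0,L)$, and let $\phi$ satisfy (H_φ). Then every weak solution $u$ of problem (P) satisfies $$\int_0^L a\Big(\frac{du}{dx}\Big)^2dx=\int_0^L g\frac{du}{dx}\,dx,\qquad \Big\|\frac{du}{dx}\Big\|_{L^2(0,L)}\le\frac1\alpha\|g\|_{L^2(0,L)},\qquad \|u\|_{L^\infty(0,L)}\le\frac{\sqrt L}{\alpha}\|g\|_{L^2(0,L)}.$$
   Context: (H_a): $a\in L^\infty(0,L)$ and there are constants $0<\alpha<\beta$ with $\alpha\le a(x)\le\beta$ for a.e. $x\in(0,L)$. (H_φ): $\phi:\mathbb{R}\to\mathbb{R}\cup\{+\infty\}$ is continuous when $\mathbb{R}\cup\{+\infty\}$ carries its usual topology, and $\phi(s)<+\infty$ for every $s\neq0$. A weak solution of problem (P) with data $(a,g,\phi)$ is a function $u$ with $u\in H^1_0(0,L)$, $\phi(u)\in L^2(0,L)$, and $-\frac{d}{dx}(a\frac{du}{dx})=-\frac{d\phi(u)}{dx}-\frac{dg}{dx}$ in $\mathcal D'(0,L)$. *)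

theory Defs
  imports "HOL-Analysis.Analysis"
begin

abbreviation Iv :: "real \<Rightarrow> real measure" where
  "Iv L \<equiv> lebesgue_on {0<..<L}"

definition L2 :: "real \<Rightarrow> (real \<Rightarrow> real) \<Rightarrow> bool" where
  "L2 L f \<longleftrightarrow> f \<in> borel_measurable (Iv L) \<and> integrable (Iv L) (\<lambda>x. (f x)\<^sup>2)"

definition L2norm :: "real \<Rightarrow> (real \<Rightarrow> real) \<Rightarrow> real" where
  "L2norm L f = sqrt (integral\<^sup>L (Iv L) (\<lambda>x. (f x)\<^sup>2))"

definition test_fun :: "real \<Rightarrow> (real \<Rightarrow> real) \<Rightarrow> bool" where
  "test_fun L \<psi> \<longleftrightarrow> (\<forall>n x. ((deriv ^^ n) \<psi>) differentiable (at x)) \<and>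
     (\<exists>c d. 0 < c \<and> d < L \<and> (\<forall>x. x \<notin> {c..d} \<longrightarrow> \<psi> x = 0))"

definition weak_deriv :: "real \<Rightarrow> (real \<Rightarrow> real) \<Rightarrow> (real \<Rightarrow> real) \<Rightarrow> bool" where
  "weak_deriv L u v \<longleftrightarrow> (\<forall>\<psi>. test_fun L \<psi> \<longrightarrow>
     integral\<^sup>L (Iv L) (\<lambda>x. u x * deriv \<psi> x) = - integral\<^sup>L (Iv L) (\<lambda>x. v x * \<psi> x))"

text \<open>H^1_0(0,L): closure of C_c^\<infinity>(0,L) in the H^1 norm.\<close>
definition H10 :: "real \<Rightarrow> (real \<Rightarrow> real) \<Rightarrow> bool" where
  "H10 L u \<longleftrightarrow> (\<exists>v. L2 L u \<and> L2 L v \<and> weak_deriv L u v \<and>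
     (\<exists>\<psi>s. (\<forall>n. test_fun L (\<psi>s n)) \<and>
        (\<lambda>n. integral\<^sup>L (Iv L) (\<lambda>x. (\<psi>s n x - u x)\<^sup>2)) \<longlonglongrightarrow> 0 \<and>
        (\<lambda>n. integral\<^sup>L (Iv L) (\<lambda>x. (deriv (\<psi>s n) x - v x)\<^sup>2)) \<longlonglongrightarrow> 0))"

text \<open>Weak solution of (P): u in H^1_0, phi(u) in L^2 (in particular finite a.e.) and
  -(a u')' = -(phi(u))' - g' in D'(0,L), i.e. for every test function psi
  int a u' psi' = int phi(u) psi' + int g psi'.\<close>
definition weak_solution :: "real \<Rightarrow> (real \<Rightarrow> real) \<Rightarrow> (real \<Rightarrow> real) \<Rightarrow> (real \<Rightarrow> ereal)
     \<Rightarrow> (real \<Rightarrow> real) \<Rightarrow> bool" where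
  "weak_solution L a g \<phi> u \<longleftrightarrow> H10 L u \<and>
     (AE x in Iv L. \<phi> (u x) \<noteq> \<infinity>) \<and> L2 L (\<lambda>x. real_of_ereal (\<phi> (u x))) \<and>
     (\<forall>v \<psi>. L2 L v \<and> weak_deriv L u v \<and> test_fun L \<psi> \<longrightarrow>
        integral\<^sup>L (Iv L) (\<lambda>x. a x * v x * deriv \<psi> x) =
          integral\<^sup>L (Iv L) (\<lambda>x. real_of_ereal (\<phi> (u x)) * deriv \<psi> x)
          + integral\<^sup>L (Iv L) (\<lambda>x. g x * deriv \<psi> x))"

end

theory Submission
  imports Defs "HOL-Computational_Algebra.Polynomial"
begin

definition Sm :: "nat \<Rightarrow> (real \<Rightarrow> real) \<Rightarrow> bool" where
  "Sm n f \<longleftrightarrow> (\<forall>k\<le>n. \<forall>x. (deriv ^^ k) f differentiable (at x))"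

definition smooth :: "(real \<Rightarrow> real) \<Rightarrow> bool" where
  "smooth f \<longleftrightarrow> (\<forall>n x. (deriv ^^ n) f differentiable (at x))"

lemma smooth_Sm: "smooth f \<longleftrightarrow> (\<forall>n. Sm n f)"
  unfolding smooth_def Sm_def by auto

lemma Sm_0: "Sm 0 f \<longleftrightarrow> (\<forall>x. f differentiable (at x))"
  unfolding Sm_def by auto

lemma Sm_Suc: "Sm (Suc n) f \<longleftrightarrow> (\<forall>x. f differentiable (at x)) \<and> Sm n (deriv f)"
proof -
  have e: "(deriv ^^ Suc k) f = (deriv ^^ k) (deriv f)" for k
    by (simp add: funpow_Suc_right del: funpow.simps)
  show ?thesis unfolding Sm_def
  proof (safe)
    fix x assume "\<forall>k\<le>Suc n. \<forall>x. (deriv ^^ k) f differentiable at x"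
    then show "f differentiable at x" by (metis funpow_0 le0)
  next
    fix k x assume "\<forall>k\<le>Suc n. \<forall>x. (deriv ^^ k) f differentiable at x" "k \<le> n"
    then show "(deriv ^^ k) (deriv f) differentiable at x" by (metis Suc_le_mono e)
  next
    fix k x assume a: "\<forall>x. f differentiable at x" "\<forall>k\<le>n. \<forall>x. (deriv ^^ k) (deriv f) differentiable at x" "k \<le> Suc n"
    show "(deriv ^^ k) f differentiable at x"
    proof (cases k)
      case 0 then show ?thesis using a by simp
    next
      case (Suc j) then show ?thesis using a e by auto
    qed
  qed
qed

lemma Sm_diff: "Sm n f \<Longrightarrow> f differentiable (at x)"
  unfolding Sm_def by (metis funpow_0 le0)

lemma Sm_mono: "Sm (Suc n) f \<Longrightarrow> Sm n f"
  unfolding Sm_def by auto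

lemma deriv_at: "f differentiable (at x) \<Longrightarrow> (f has_real_derivative deriv f x) (at x)"
  using DERIV_deriv_iff_real_differentiable by blast

lemma Sm_const: "Sm n (\<lambda>x. c)"
proof (induction n arbitrary: c)
  case 0 then show ?case by (simp add: Sm_0)
next
  case (Suc n)
  have "deriv (\<lambda>x. c) = (\<lambda>x. 0)" by (rule ext) simp
  then show ?case using Suc by (simp add: Sm_Suc)
qed

lemma Sm_id: "Sm n (\<lambda>x. x)"
proof (cases n)
  case 0 then show ?thesis by (simp add: Sm_0)
next
  case (Suc m)
  have "deriv (\<lambda>x::real. x) = (\<lambda>x. 1)" by (rule ext) simp
  then show ?thesis using Suc Sm_const by (simp add: Sm_Suc)
qed

lemma Sm_add: "Sm n f \<Longrightarrow> Sm n g \<Longrightarrow> Sm n (\<lambda>x. f x + g x)"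
proof (induction n arbitrary: f g)
  case 0 then show ?case by (simp add: Sm_0)
next
  case (Suc n)
  have d: "\<And>x. f differentiable (at x)" "\<And>x. g differentiable (at x)"
    using Suc.prems Sm_Suc by auto
  have "deriv (\<lambda>x. f x + g x) = (\<lambda>x. deriv f x + deriv g x)"
    by (rule ext, rule DERIV_imp_deriv, intro derivative_intros deriv_at d)
  then show ?case using Suc d by (simp add: Sm_Suc)
qed

lemma Sm_mult: "Sm n f \<Longrightarrow> Sm n g \<Longrightarrow> Sm n (\<lambda>x. f x * g x)"
proof (induction n arbitrary: f g)
  case 0 then show ?case by (simp add: Sm_0)
next
  case (Suc n)
  have d: "\<And>x. f differentiable (at x)" "\<And>x. g differentiable (at x)"
    using Suc.prems Sm_Suc by auto
  have "deriv (\<lambda>x. f x * g x) = (\<lambda>x. deriv f x * g x + deriv g x * f x)"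
    by (rule ext, rule DERIV_imp_deriv, rule DERIV_mult[OF deriv_at[OF d(1)] deriv_at[OF d(2)]])
  moreover have "Sm n (\<lambda>x. deriv f x * g x + deriv g x * f x)"
    using Suc Sm_mono Sm_Suc Sm_add by meson
  ultimately show ?case using d by (simp add: Sm_Suc)
qed

lemma affine_deriv: "(f::real\<Rightarrow>real) differentiable (at (c * x + d)) \<Longrightarrow>
   ((\<lambda>x. f (c * x + d)) has_real_derivative c * deriv f (c * x + d)) (at x)"
proof -
  assume d: "f differentiable (at (c * x + d))"
  have "((\<lambda>x. c * x + d) has_real_derivative c) (at x)"
    by (auto intro!: derivative_eq_intros)
  from DERIV_chain2[OF deriv_at[OF d] this]
  show ?thesis by (simp add: mult.commute)
qed

lemma affine_diff: "(f::real\<Rightarrow>real) differentiable (at (c * x + d)) \<Longrightarrow> (\<lambda>x. f (c * x + d)) differentiable (at x)"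
  using affine_deriv[of f c x d] unfolding real_differentiable_def by blast

lemma Sm_affine: "Sm n f \<Longrightarrow> Sm n (\<lambda>x. f (c * x + d))"
proof (induction n arbitrary: f)
  case 0
  then have "\<And>x. f differentiable (at x)" by (simp add: Sm_0)
  then have "\<And>x. (\<lambda>x. f (c * x + d)) differentiable (at x)"
    using affine_diff by blast
  then show ?case by (simp add: Sm_0)
next
  case (Suc n)
  have d: "\<And>x. f differentiable (at x)" using Suc.prems Sm_Suc by auto
  have dd: "\<And>x. (\<lambda>x. f (c * x + d)) differentiable (at x)"
    using affine_diff d by blast
  have "deriv (\<lambda>x. f (c * x + d)) = (\<lambda>x. c * deriv f (c * x + d))"
    by (rule ext, rule DERIV_imp_deriv, rule affine_deriv, rule d)
  moreover have "Sm n (\<lambda>x. c * deriv f (c * x + d))"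
    using Suc Sm_Suc Sm_mult Sm_const by meson
  ultimately show ?case using dd by (simp add: Sm_Suc)
qed


lemma Sm_inverse: "(\<And>x. g x \<noteq> 0) \<Longrightarrow> Sm n g \<Longrightarrow> Sm n (\<lambda>x. inverse (g x))"
proof (induction n)
  case 0
  then show ?case unfolding Sm_0 using DERIV_inverse_fun deriv_at real_differentiable_def by blast
next
  case (Suc n)
  have d: "\<And>x. g differentiable (at x)" using Suc.prems Sm_Suc by auto
  have dd: "\<And>x. (\<lambda>x. inverse (g x)) differentiable (at x)"
    using DERIV_inverse_fun[OF deriv_at[OF d] Suc.prems(1)] real_differentiable_def by blast
  have "deriv (\<lambda>x. inverse (g x)) = (\<lambda>x. (-1) * (deriv g x * (inverse (g x) * inverse (g x))))"
  proof (rule ext, rule DERIV_imp_deriv)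
    fix x
    show "((\<lambda>x. inverse (g x)) has_real_derivative (-1) * (deriv g x * (inverse (g x) * inverse (g x)))) (at x)"
      using DERIV_inverse_fun[OF deriv_at[OF d] Suc.prems(1), of x]
      by (simp add: power2_eq_square)
  qed
  moreover have "Sm n (\<lambda>x. (-1) * (deriv g x * (inverse (g x) * inverse (g x))))"
    using Suc Sm_mono Sm_Suc Sm_mult Sm_const by meson
  ultimately show ?case using dd by (simp add: Sm_Suc)
qed

definition Q :: "real poly \<Rightarrow> real \<Rightarrow> real" where
  "Q p x = (if 0 < x then poly p (inverse x) * exp (- inverse x) else 0)"

definition dq :: "real poly \<Rightarrow> real poly" where
  "dq p = [:0,0,1:] * (p - pderiv p)"

lemma poly_exp_lim: "((\<lambda>t. poly q t * exp (- t)) \<longlongrightarrow> (0::real)) at_top"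
proof -
  have e: "(\<lambda>t. poly q t * exp (- t)) = (\<lambda>t. \<Sum>i\<le>degree q. coeff q i * (t ^ i / exp t))"
    by (rule ext) (simp add: poly_altdef sum_distrib_right exp_minus divide_inverse mult.assoc)
  show ?thesis unfolding e
    by (intro tendsto_null_sum tendsto_mult_right_zero tendsto_power_div_exp_0)
qed

lemma Q_deriv: "(Q p has_real_derivative Q (dq p) x) (at x)"
proof (cases "0 < x")
  case True
  have "((\<lambda>x. poly p (inverse x) * exp (- inverse x)) has_real_derivative Q (dq p) x) (at x)"
  proof -
    have i: "(inverse has_real_derivative - (inverse x * inverse x)) (at x)"
      using DERIV_inverse[of x] True by (simp add: power2_eq_square)
    have a: "((\<lambda>x. poly p (inverse x)) has_real_derivative poly (pderiv p) (inverse x) * (- (inverse x * inverse x))) (at x)"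
      using DERIV_chain2[OF poly_DERIV i] .
    have b: "((\<lambda>x. exp (- inverse x)) has_real_derivative exp (- inverse x) * (inverse x * inverse x)) (at x)"
      using DERIV_chain2[OF DERIV_exp DERIV_minus[OF i]] by simp
    show ?thesis using DERIV_mult[OF a b] True
      by (simp add: Q_def dq_def algebra_simps power2_eq_square)
  qed
  then show ?thesis
    by (rule has_field_derivative_transform_within_open[where S="{0<..}"]) (use True in \<open>auto simp: Q_def\<close>)
next
  case False
  show ?thesis
  proof (cases "x < 0")
    case True
    have "((\<lambda>x. 0) has_real_derivative Q (dq p) x) (at x)" using True by (simp add: Q_def)
    then show ?thesis
      by (rule has_field_derivative_transform_within_open[where S="{..<0}"]) (use True in \<open>auto simp: Q_def\<close>)
  next
    case False
    with \<open>\<not> 0 < x\<close> have x0: "x = 0" by simp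
    have "((\<lambda>y. (Q p y - Q p 0) / (y - 0)) \<longlongrightarrow> 0) (at 0)"
    proof (rule filterlim_split_at)
      show "((\<lambda>y. (Q p y - Q p 0) / (y - 0)) \<longlongrightarrow> 0) (at_left 0)"
        by (rule tendsto_eventually) (auto simp: Q_def eventually_at_left_field intro!: exI[of _ "-1"])
      have lim: "((\<lambda>t. poly (pCons 0 p) t * exp (- t)) \<longlongrightarrow> (0::real)) at_top"
        by (rule poly_exp_lim)
      have "((\<lambda>y. poly (pCons 0 p) (inverse y) * exp (- inverse y)) \<longlongrightarrow> 0) (at_right 0)"
        using filterlim_compose[OF lim filterlim_inverse_at_top_right] by (simp add: o_def)
      moreover have "\<forall>\<^sub>F y in at_right 0. poly (pCons 0 p) (inverse y) * exp (- inverse y) = (Q p y - Q p 0) / (y - 0)"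
        unfolding eventually_at_right_field
      proof (intro exI[of _ 1] conjI allI impI)
        fix y :: real assume "0 < y" "y < 1"
        then show "poly (pCons 0 p) (inverse y) * exp (- inverse y) = (Q p y - Q p 0) / (y - 0)"
          by (simp add: Q_def divide_inverse)
      qed simp
      ultimately show "((\<lambda>y. (Q p y - Q p 0) / (y - 0)) \<longlongrightarrow> 0) (at_right 0)"
        by (rule Lim_transform_eventually)
    qed
    then have "(Q p has_real_derivative 0) (at 0)" by (simp add: has_field_derivative_iff)
    then show ?thesis using x0 by (simp add: Q_def)
  qed
qed

lemma deriv_Q: "deriv (Q p) = Q (dq p)"
  by (rule ext, rule DERIV_imp_deriv, rule Q_deriv)

lemma Sm_Q: "Sm n (Q p)"
proof (induction n arbitrary: p)
  case 0 then show ?case unfolding Sm_0 using Q_deriv real_differentiable_def by blast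
next
  case (Suc n) then show ?case unfolding Sm_Suc deriv_Q using Q_deriv real_differentiable_def by blast
qed

definition E :: "real \<Rightarrow> real" where "E = Q 1"

lemma E_pos: "x > 0 \<Longrightarrow> E x > 0" and E_zero: "x \<le> 0 \<Longrightarrow> E x = 0"
  by (auto simp: E_def Q_def)

lemma E_nonneg: "E x \<ge> 0" by (simp add: E_def Q_def)

lemma Sm_E: "Sm n E" unfolding E_def by (rule Sm_Q)

definition St :: "real \<Rightarrow> real" where "St x = E x * inverse (E x + E (1 - x))"

lemma St_denom: "E x + E (1 - x) \<noteq> 0"
proof -
  have "E x > 0 \<or> E (1 - x) > 0" using E_pos by (cases "x > 0") auto
  moreover have "E x \<ge> 0" "E (1-x) \<ge> 0" by (rule E_nonneg)+
  ultimately show ?thesis by linarith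
qed

lemma Sm_St: "Sm n St"
proof -
  have "Sm n (\<lambda>x. E x + E ((-1) * x + 1))" by (intro Sm_add Sm_E Sm_affine)
  then have "Sm n (\<lambda>x. inverse (E x + E (1 - x)))"
    using Sm_inverse[OF St_denom] by simp
  then show ?thesis unfolding St_def[abs_def] using Sm_mult Sm_E by blast
qed

lemma St_0: "x \<le> 0 \<Longrightarrow> St x = 0" by (simp add: St_def E_zero)
lemma St_1: "x \<ge> 1 \<Longrightarrow> St x = 1"
  using St_denom[of x] by (simp add: St_def E_zero)
lemma St_range: "0 \<le> St x \<and> St x \<le> 1"
proof -
  have a: "E x \<ge> 0" "E (1-x) \<ge> 0" by (rule E_nonneg)+
  then have "E x + E (1 - x) > 0" using St_denom[of x] by linarith
  then show ?thesis using a unfolding St_def divide_inverse[symmetric]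
    by (simp add: divide_le_eq_1)
qed


lemma smooth_test_fun:
  assumes "\<And>n. Sm n \<psi>" "0 < c" "d < L" "\<And>x. x \<notin> {c..d} \<Longrightarrow> \<psi> x = 0"
  shows "test_fun L \<psi>"
  unfolding test_fun_def using assms unfolding Sm_def by blast

lemma test_fun_Sm: "test_fun L \<psi> \<Longrightarrow> Sm n \<psi>"
  unfolding test_fun_def Sm_def by blast

lemma Sm_cont: "Sm n f \<Longrightarrow> continuous_on UNIV f"
  using Sm_diff differentiable_imp_continuous_on differentiable_on_def by blast

lemma meas_Iv: "continuous_on UNIV f \<Longrightarrow> f \<in> borel_measurable (Iv L)"
  by (rule continuous_imp_measurable_on_sets_lebesgue) (auto intro: continuous_on_subset)

definition cut :: "real \<Rightarrow> real \<Rightarrow> real \<Rightarrow> real \<Rightarrow> real" where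
  "cut \<delta> p q x = St ((x - p - \<delta>) / \<delta>) * St ((q - \<delta> - x) / \<delta>)"

lemma Sm_cut: assumes "\<delta> > 0" shows "Sm n (cut \<delta> p q)"
proof -
  have "Sm n (\<lambda>x. St (inverse \<delta> * x + (- (p + \<delta>) / \<delta>)) * St ((- inverse \<delta>) * x + (q - \<delta>) / \<delta>))"
    by (intro Sm_mult Sm_affine Sm_St)
  moreover have "(\<lambda>x. St (inverse \<delta> * x + (- (p + \<delta>) / \<delta>)) * St ((- inverse \<delta>) * x + (q - \<delta>) / \<delta>)) = cut \<delta> p q"
  proof (rule ext)
    fix x
    have "inverse \<delta> * x + (- (p + \<delta>) / \<delta>) = (x - p - \<delta>) / \<delta>"
         "(- inverse \<delta>) * x + (q - \<delta>) / \<delta> = (q - \<delta> - x) / \<delta>"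
      using assms by (simp_all add: field_simps)
    then show "St (inverse \<delta> * x + (- (p + \<delta>) / \<delta>)) * St ((- inverse \<delta>) * x + (q - \<delta>) / \<delta>) = cut \<delta> p q x"
      by (simp only: cut_def)
  qed
  ultimately show ?thesis by simp
qed

lemma cut_zero: assumes "\<delta> > 0" "x \<notin> {p + \<delta>..q - \<delta>}" shows "cut \<delta> p q x = 0"
proof -
  have "x < p + \<delta> \<or> x > q - \<delta>" using assms(2) by auto
  then show ?thesis
  proof
    assume "x < p + \<delta>" then have "(x - p - \<delta>) / \<delta> \<le> 0" using assms(1) by (simp add: divide_nonpos_pos)
    then show ?thesis by (simp add: cut_def St_0)
  next
    assume "x > q - \<delta>" then have "(q - \<delta> - x) / \<delta> \<le> 0" using assms(1) by (simp add: divide_nonpos_pos)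
    then show ?thesis by (simp add: cut_def St_0)
  qed
qed

lemma cut_one: assumes "\<delta> > 0" "p + 2 * \<delta> \<le> x" "x \<le> q - 2 * \<delta>" shows "cut \<delta> p q x = 1"
proof -
  have "(x - p - \<delta>) / \<delta> \<ge> 1" "(q - \<delta> - x) / \<delta> \<ge> 1" using assms by (simp_all add: field_simps)
  then show ?thesis by (simp add: cut_def St_1)
qed

lemma cut_bound: "\<bar>cut \<delta> p q x\<bar> \<le> 1"
  using St_range[of "(x - p - \<delta>) / \<delta>"] St_range[of "(q - \<delta> - x) / \<delta>"]
  by (simp add: cut_def abs_mult mult_le_one)

lemma cut_test: assumes "\<delta> > 0" "0 \<le> p" "q \<le> L" shows "test_fun L (cut \<delta> p q)"
  by (rule smooth_test_fun[where c="p+\<delta>" and d="q-\<delta>"]) (use assms Sm_cut cut_zero in auto)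

lemma interval_zero:
  assumes L: "L > 0" and w: "integrable (Iv L) w"
    and T: "\<And>\<psi>. test_fun L \<psi> \<Longrightarrow> integral\<^sup>L (Iv L) (\<lambda>x. w x * \<psi> x) = 0"
    and pq: "0 \<le> p" "p < q" "q \<le> L"
  shows "integral\<^sup>L (Iv L) (\<lambda>x. w x * indicator {p<..<q} x) = 0"
proof -
  define \<delta> where "\<delta> n = (q - p) / 4 * inverse (real (Suc n))" for n
  have dpos: "\<delta> n > 0" for n using pq by (simp add: \<delta>_def)
  have dlim: "\<delta> \<longlonglongrightarrow> 0"
    unfolding \<delta>_def using tendsto_mult_right_zero[OF LIMSEQ_inverse_real_of_nat] by simp
  have wm: "w \<in> borel_measurable (Iv L)" using w by auto
  have idm: "(\<lambda>x. x) \<in> borel_measurable (Iv L)" by (rule meas_Iv) (rule continuous_on_id)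
  have lim: "(\<lambda>n. integral\<^sup>L (Iv L) (\<lambda>x. w x * cut (\<delta> n) p q x)) \<longlonglongrightarrow> integral\<^sup>L (Iv L) (\<lambda>x. w x * indicator {p<..<q} x)"
  proof (rule integral_dominated_convergence[where w="\<lambda>x. norm (w x)"])
    show "(\<lambda>x. w x * indicator {p<..<q} x) \<in> borel_measurable (Iv L)"
      using wm idm by measurable
    show "(\<lambda>x. w x * cut (\<delta> n) p q x) \<in> borel_measurable (Iv L)" for n
      using wm meas_Iv[OF Sm_cont[OF Sm_cut[OF dpos]]] by measurable
    show "integrable (Iv L) (\<lambda>x. norm (w x))" using w by auto
    show "AE x in Iv L. norm (w x * cut (\<delta> n) p q x) \<le> norm (w x)" for n
      using cut_bound by (auto simp: abs_mult intro!: mult_left_le)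
    show "AE x in Iv L. (\<lambda>n. w x * cut (\<delta> n) p q x) \<longlonglongrightarrow> w x * indicator {p<..<q} x"
    proof (rule AE_I2)
      fix x
      show "(\<lambda>n. w x * cut (\<delta> n) p q x) \<longlonglongrightarrow> w x * indicator {p<..<q} x"
      proof (cases "p < x \<and> x < q")
        case True
        define m where "m = min (x - p) (q - x) / 2"
        have "m > 0" using True by (simp add: m_def)
        then have "\<forall>\<^sub>F n in sequentially. \<delta> n < m" using order_tendstoD(2)[OF dlim] by blast
        then have "\<forall>\<^sub>F n in sequentially. w x * cut (\<delta> n) p q x = w x * indicator {p<..<q} x"
        proof (rule eventually_mono)
          fix n assume "\<delta> n < m"
          then have "cut (\<delta> n) p q x = 1" using True dpos[of n]
            by (intro cut_one) (auto simp: m_def)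
          then show "w x * cut (\<delta> n) p q x = w x * indicator {p<..<q} x" using True by simp
        qed
        then show ?thesis by (rule tendsto_eventually)
      next
        case False
        have "cut (\<delta> n) p q x = 0" for n
          by (rule cut_zero[OF dpos[of n]]) (use False dpos[of n] in auto)
        then have "w x * cut (\<delta> n) p q x = w x * indicator {p<..<q} x" for n
          using False by auto
        then show ?thesis by (simp only:) (rule tendsto_const)
      qed
    qed
  qed
  moreover have "integral\<^sup>L (Iv L) (\<lambda>x. w x * cut (\<delta> n) p q x) = 0" for n
    by (rule T, rule cut_test) (use dpos pq in auto)
  ultimately show ?thesis using LIMSEQ_unique[OF _ tendsto_const] by simp
qed


lemma box_ints_zero:
  fixes W' :: "real \<Rightarrow> real"
  assumes W'm: "W' \<in> borel_measurable lborel" and Wi: "integrable lborel W'"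
    and Z: "\<And>a b. integral\<^sup>L lborel (\<lambda>x. W' x * indicator (box a b) x) = 0"
  shows "AE x in lborel. W' x = 0"
proof -
  define E where "E = range (\<lambda>(a, b). box a b :: real set)"
  define N1 where "N1 = density lborel (\<lambda>x. ennreal (W' x))"
  define N2 where "N2 = density lborel (\<lambda>x. ennreal (- W' x))"
  have sE: "sets borel = sigma_sets UNIV E"
    unfolding E_def by (subst borel_eq_box) (simp add: sets_measure_of)
  have fin1: "(\<integral>\<^sup>+ x. ennreal (W' x * indicator A x) \<partial>lborel) \<noteq> \<infinity>"
   and fin2: "(\<integral>\<^sup>+ x. ennreal (- (W' x * indicator A x)) \<partial>lborel) \<noteq> \<infinity>" if "A \<in> sets borel" for A
  proof -
    have "integrable lborel (\<lambda>x. W' x * indicator A x)"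
      using integrable_mult_indicator[of A lborel W'] Wi that by (simp add: mult.commute)
    then show "(\<integral>\<^sup>+ x. ennreal (W' x * indicator A x) \<partial>lborel) \<noteq> \<infinity>"
        "(\<integral>\<^sup>+ x. ennreal (- (W' x * indicator A x)) \<partial>lborel) \<noteq> \<infinity>"
      unfolding real_integrable_def by auto
  qed
  have e1: "emeasure N1 A = (\<integral>\<^sup>+ x. ennreal (W' x * indicator A x) \<partial>lborel)"
   and e2: "emeasure N2 A = (\<integral>\<^sup>+ x. ennreal (- (W' x * indicator A x)) \<partial>lborel)"
    if "A \<in> sets borel" for A
    unfolding N1_def N2_def using that W'm
    by (auto simp: emeasure_density intro!: nn_integral_cong split: split_indicator)
  have "N1 = N2"
  proof (rule measure_eqI_generator_eq[where \<Omega>=UNIV and E=E and A="\<lambda>i. box (- real i) (real i)"])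
    show "Int_stable E"
      unfolding E_def Int_stable_def
      by (auto simp: image_iff)
    show "E \<subseteq> Pow UNIV" by simp
    show "sets N1 = sigma_sets UNIV E" "sets N2 = sigma_sets UNIV E"
      using sE by (simp_all add: N1_def N2_def)
    have "box (- real i) (real i) \<in> E" for i
      unfolding E_def by (rule image_eqI[where x="(- real i, real i)"]) simp_all
    then show "range (\<lambda>i. box (- real i) (real i)) \<subseteq> E" by auto
    show "(\<Union>i. box (- real i) (real i)) = (UNIV :: real set)"
    proof (intro set_eqI iffI)
      fix x :: real
      obtain n :: nat where "\<bar>x\<bar> < real n" using reals_Archimedean2 by blast
      then have "- real n < x \<and> x < real n" by linarith
      then show "x \<in> (\<Union>i. box (- real i) (real i))" by (auto simp: box_real)
    qed auto
    show "emeasure N1 (box (- real i) (real i)) \<noteq> \<infinity>" for i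
      using e1 fin1 by simp
    fix X assume "X \<in> E"
    then obtain a b where X: "X = box a b" unfolding E_def by auto
    have Xs: "X \<in> sets borel" using X by simp
    have I: "integrable lborel (\<lambda>x. W' x * indicator X x)"
      using integrable_mult_indicator[of X lborel W'] Wi Xs by (simp add: mult.commute)
    have "0 = enn2real (\<integral>\<^sup>+ x. ennreal (W' x * indicator X x) \<partial>lborel)
           - enn2real (\<integral>\<^sup>+ x. ennreal (- (W' x * indicator X x)) \<partial>lborel)"
      using real_lebesgue_integral_def[OF I] Z X by simp
    then have "enn2real (\<integral>\<^sup>+ x. ennreal (W' x * indicator X x) \<partial>lborel)
           = enn2real (\<integral>\<^sup>+ x. ennreal (- (W' x * indicator X x)) \<partial>lborel)" by simp
    moreover have "ennreal (enn2real (\<integral>\<^sup>+ x. ennreal (W' x * indicator X x) \<partial>lborel)) = (\<integral>\<^sup>+ x. ennreal (W' x * indicator X x) \<partial>lborel)"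
      using fin1[OF Xs] by (intro ennreal_enn2real) (simp add: less_top)
    moreover have "ennreal (enn2real (\<integral>\<^sup>+ x. ennreal (- (W' x * indicator X x)) \<partial>lborel)) = (\<integral>\<^sup>+ x. ennreal (- (W' x * indicator X x)) \<partial>lborel)"
      using fin2[OF Xs] by (intro ennreal_enn2real) (simp add: less_top)
    ultimately have "(\<integral>\<^sup>+ x. ennreal (W' x * indicator X x) \<partial>lborel)
           = (\<integral>\<^sup>+ x. ennreal (- (W' x * indicator X x)) \<partial>lborel)"
      by metis
    then show "emeasure N1 X = emeasure N2 X" using e1[OF Xs] e2[OF Xs] by simp
  qed
  then have "AE x in lborel. ennreal (W' x) = ennreal (- W' x)"
    unfolding N1_def N2_def using W'm
    by (intro sigma_finite_measure.density_unique[OF sigma_finite_lborel]) auto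
  moreover have "ennreal (W' x) = ennreal (- W' x) \<Longrightarrow> W' x = 0" for x
  proof -
    assume a: "ennreal (W' x) = ennreal (- W' x)"
    show "W' x = 0"
    proof (rule ccontr)
      assume "W' x \<noteq> 0"
      then have "W' x > 0 \<or> W' x < 0" by linarith
      then show False
      proof
        assume p: "W' x > 0"
        then have "ennreal (- W' x) = 0" by (simp add: ennreal_neg)
        then have "ennreal (W' x) = 0" using a by simp
        then have "W' x \<le> 0" using ennreal_eq_0_iff by blast
        then show False using p by simp
      next
        assume p: "W' x < 0"
        then have "ennreal (W' x) = 0" by (simp add: ennreal_neg)
        then have "ennreal (- W' x) = 0" using a by simp
        then have "- W' x \<le> 0" using ennreal_eq_0_iff by blast
        then show False using p by simp
      qed
    qed
  qed
  ultimately show ?thesis by (auto elim: AE_mp)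
qed


lemma fundamental:
  assumes L: "L > 0" and w: "integrable (Iv L) w"
    and T: "\<And>\<psi>. test_fun L \<psi> \<Longrightarrow> integral\<^sup>L (Iv L) (\<lambda>x. w x * \<psi> x) = 0"
  shows "AE x in Iv L. w x = 0"
proof -
  define \<Omega> where "\<Omega> = {0<..<L::real}"
  have \<Omega>s: "\<Omega> \<inter> space lebesgue \<in> sets lebesgue" by (simp add: \<Omega>_def)
  define W where "W x = indicator \<Omega> x * w x" for x
  have Wi: "integrable lebesgue W"
    using w integrable_restrict_space[OF \<Omega>s, of w] unfolding W_def \<Omega>_def by simp
  then have "W \<in> borel_measurable (completion lborel)" by auto
  then obtain W' where W'm: "W' \<in> borel_measurable lborel" and WW': "AE x in lborel. W x = W' x"
    using completion_ex_borel_measurable_real by blast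
  have WW'c: "AE x in lebesgue. W x = W' x" using WW' by (rule AE_completion)
  have W'i: "integrable lborel W'"
  proof -
    have "integrable lebesgue W'"
      by (rule integrable_cong_AE_imp[OF Wi measurable_completion[OF W'm] WW'c])
    then show ?thesis using integrable_completion[of W' lborel] W'm by simp
  qed
  have Z: "integral\<^sup>L lborel (\<lambda>x. W' x * indicator (box a b) x) = 0" for a b
  proof -
    have m: "(\<lambda>x. W' x * indicator (box a b) x) \<in> borel_measurable lborel" using W'm by measurable
    have "integral\<^sup>L lborel (\<lambda>x. W' x * indicator (box a b) x) = integral\<^sup>L lebesgue (\<lambda>x. W' x * indicator (box a b) x)"
      using integral_completion[of "\<lambda>x. W' x * indicator (box a b) x" lborel] m by simp
    also have "\<dots> = integral\<^sup>L lebesgue (\<lambda>x. W x * indicator (box a b) x)"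
    proof (rule integral_cong_AE)
      show "(\<lambda>x. W' x * indicator (box a b) x) \<in> borel_measurable lebesgue"
        using measurable_completion[OF m] by simp
      have Wm: "W \<in> borel_measurable lebesgue" using Wi by auto
      have idm: "(\<lambda>x::real. x) \<in> borel_measurable lebesgue" by (rule measurable_completion) simp
      show "(\<lambda>x. W x * indicator (box a b) x) \<in> borel_measurable lebesgue" using Wm idm by measurable
      show "AE x in lebesgue. W' x * indicator (box a b) x = W x * indicator (box a b) x"
        using WW'c by eventually_elim simp
    qed
    also have "\<dots> = integral\<^sup>L (Iv L) (\<lambda>x. w x * indicator (box a b) x)"
      using integral_restrict_space[OF \<Omega>s, of "\<lambda>x. w x * indicator (box a b) x"]
      unfolding W_def \<Omega>_def by (simp add: mult.assoc)
    also have "\<dots> = 0"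
    proof (cases "max a 0 < min b L")
      case True
      have "integral\<^sup>L (Iv L) (\<lambda>x. w x * indicator (box a b) x) = integral\<^sup>L (Iv L) (\<lambda>x. w x * indicator {max a 0<..<min b L} x)"
        by (rule Bochner_Integration.integral_cong) (auto simp: indicator_def box_real)
      also have "\<dots> = 0" by (rule interval_zero[OF L w T]) (use True L in auto)
      finally show ?thesis .
    next
      case False
      have "integral\<^sup>L (Iv L) (\<lambda>x. w x * indicator (box a b) x) = integral\<^sup>L (Iv L) (\<lambda>x. 0)"
        by (rule Bochner_Integration.integral_cong) (use False in \<open>auto simp: indicator_def box_real\<close>)
      then show ?thesis by simp
    qed
    finally show ?thesis .
  qed
  have "AE x in lborel. W' x = 0" by (rule box_ints_zero[OF W'm W'i Z])
  then have "AE x in lebesgue. W' x = 0" by (rule AE_completion)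
  with WW'c have "AE x in lebesgue. x \<in> \<Omega> \<longrightarrow> w x = 0"
    by eventually_elim (auto simp: W_def)
  then show ?thesis
    unfolding \<Omega>_def using AE_restrict_space_iff[OF \<Omega>s[unfolded \<Omega>_def]] by simp
qed


lemma fm_Iv: "finite_measure (Iv L)"
  by (rule finite_measure_lebesgue_on) (simp add: lmeasurable_interval)

lemma measure_Iv: "L \<ge> 0 \<Longrightarrow> measure (Iv L) (space (Iv L)) = L"
  by (simp add: measure_restrict_space)

lemma int_const_Iv: "integrable (Iv L) (\<lambda>x. c)"
  using finite_measure.integrable_const[OF fm_Iv] by blast

lemma integrable_L2_mult:
  fixes f g :: "'a \<Rightarrow> real"
  assumes "f \<in> borel_measurable M" "g \<in> borel_measurable M"
    "integrable M (\<lambda>x. (f x)\<^sup>2)" "integrable M (\<lambda>x. (g x)\<^sup>2)"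
  shows "integrable M (\<lambda>x. f x * g x)"
proof (rule Bochner_Integration.integrable_bound[where f="\<lambda>x. (f x)\<^sup>2 + (g x)\<^sup>2"])
  show "integrable M (\<lambda>x. (f x)\<^sup>2 + (g x)\<^sup>2)" using assms by auto
  show "(\<lambda>x. f x * g x) \<in> borel_measurable M" using assms by auto
  show "AE x in M. norm (f x * g x) \<le> norm ((f x)\<^sup>2 + (g x)\<^sup>2)"
  proof (rule AE_I2)
    fix x
    have "2 * \<bar>f x\<bar> * \<bar>g x\<bar> \<le> (f x)\<^sup>2 + (g x)\<^sup>2"
      using sum_squares_bound[of "\<bar>f x\<bar>" "\<bar>g x\<bar>"] by (simp add: power2_abs)
    moreover have "\<bar>f x\<bar> * \<bar>g x\<bar> \<ge> 0" by simp
    ultimately have "\<bar>f x\<bar> * \<bar>g x\<bar> \<le> (f x)\<^sup>2 + (g x)\<^sup>2" by linarith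
    then show "norm (f x * g x) \<le> norm ((f x)\<^sup>2 + (g x)\<^sup>2)"
      by (simp add: abs_mult)
  qed
qed

lemma sq_expand: "(s::real) > 0 \<Longrightarrow> (s * a - b / s)\<^sup>2 = s\<^sup>2 * a\<^sup>2 - 2 * a * b + b\<^sup>2 / s\<^sup>2"
  by (simp add: power2_eq_square field_simps)

lemma CS_abs:
  fixes f g :: "'a \<Rightarrow> real"
  assumes fm: "f \<in> borel_measurable M" and gm: "g \<in> borel_measurable M"
    and fi: "integrable M (\<lambda>x. (f x)\<^sup>2)" and gi: "integrable M (\<lambda>x. (g x)\<^sup>2)"
  shows "integral\<^sup>L M (\<lambda>x. \<bar>f x * g x\<bar>) \<le> sqrt (integral\<^sup>L M (\<lambda>x. (f x)\<^sup>2)) * sqrt (integral\<^sup>L M (\<lambda>x. (g x)\<^sup>2))"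
proof -
  define A where "A = integral\<^sup>L M (\<lambda>x. (f x)\<^sup>2)"
  define B where "B = integral\<^sup>L M (\<lambda>x. (g x)\<^sup>2)"
  define C where "C = integral\<^sup>L M (\<lambda>x. \<bar>f x * g x\<bar>)"
  have fgi: "integrable M (\<lambda>x. \<bar>f x * g x\<bar>)"
    using integrable_L2_mult[OF assms] by auto
  have A0: "A \<ge> 0" "B \<ge> 0" "C \<ge> 0" unfolding A_def B_def C_def by auto
  have key: "2 * C \<le> t * A + B / t" if t: "t > 0" for t
  proof -
    have "2 * C = integral\<^sup>L M (\<lambda>x. 2 * \<bar>f x * g x\<bar>)" unfolding C_def by simp
    also have "\<dots> \<le> integral\<^sup>L M (\<lambda>x. t * (f x)\<^sup>2 + (g x)\<^sup>2 / t)"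
    proof (rule integral_mono)
      show "integrable M (\<lambda>x. 2 * \<bar>f x * g x\<bar>)" using fgi by auto
      show "integrable M (\<lambda>x. t * (f x)\<^sup>2 + (g x)\<^sup>2 / t)" using fi gi by auto
      fix x
      have "0 \<le> (sqrt t * \<bar>f x\<bar> - \<bar>g x\<bar> / sqrt t)\<^sup>2" by simp
      also have "\<dots> = (sqrt t)\<^sup>2 * \<bar>f x\<bar>\<^sup>2 - 2 * \<bar>f x\<bar> * \<bar>g x\<bar> + \<bar>g x\<bar>\<^sup>2 / (sqrt t)\<^sup>2"
        using t by (intro sq_expand) simp
      also have "\<dots> = t * (f x)\<^sup>2 + (g x)\<^sup>2 / t - 2 * \<bar>f x * g x\<bar>"
        using t by (simp add: abs_mult)
      finally show "2 * \<bar>f x * g x\<bar> \<le> t * (f x)\<^sup>2 + (g x)\<^sup>2 / t" by simp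
    qed
    also have "\<dots> = t * A + B / t" unfolding A_def B_def using fi gi by simp
    finally show ?thesis .
  qed
  show ?thesis
  proof (cases "A > 0 \<and> B > 0")
    case True
    define t where "t = sqrt B / sqrt A"
    have tp: "t > 0" using True by (simp add: t_def)
    have "t * A + B / t = 2 * (sqrt A * sqrt B)"
      using True unfolding t_def
      by (simp add: field_simps)
    then show ?thesis using key[OF tp] unfolding A_def[symmetric] B_def[symmetric] C_def[symmetric] by simp
  next
    case False
    then have "A = 0 \<or> B = 0" using A0 by linarith
    have "C \<le> 0"
    proof (rule ccontr)
      assume "\<not> C \<le> 0"
      then have Cp: "C > 0" by simp
      show False
      proof (cases "A = 0")
        case True
        define t where "t = (B + 1) / C"
        have tp: "t > 0" using Cp A0 by (simp add: t_def)
        have "2 * C \<le> B / t" using key[OF tp] True by simp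
        also have "B / t = B * C / (B + 1)" using Cp A0 by (simp add: t_def)
        also have "\<dots> < C" using Cp A0 by (simp add: field_simps)
        finally show False using Cp by simp
      next
        case False
        then have B0: "B = 0" using \<open>A = 0 \<or> B = 0\<close> by simp
        define t where "t = C / (A + 1)"
        have tp: "t > 0" using Cp A0 by (simp add: t_def)
        have "2 * C \<le> t * A" using key[OF tp] B0 by simp
        also have "t * A = C * A / (A + 1)" by (simp add: t_def)
        also have "\<dots> < C" using Cp A0 by (simp add: field_simps)
        finally show False using Cp by simp
      qed
    qed
    then show ?thesis using A0 unfolding A_def[symmetric] B_def[symmetric] C_def[symmetric] by simp
  qed
qed

lemma CS:
  fixes f g :: "'a \<Rightarrow> real"
  assumes fm: "f \<in> borel_measurable M" and gm: "g \<in> borel_measurable M"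
    and fi: "integrable M (\<lambda>x. (f x)\<^sup>2)" and gi: "integrable M (\<lambda>x. (g x)\<^sup>2)"
  shows "\<bar>integral\<^sup>L M (\<lambda>x. f x * g x)\<bar> \<le> sqrt (integral\<^sup>L M (\<lambda>x. (f x)\<^sup>2)) * sqrt (integral\<^sup>L M (\<lambda>x. (g x)\<^sup>2))"
  using CS_abs[OF assms] integral_abs_bound[of M "\<lambda>x. f x * g x"] by linarith

lemma L2_integrable: assumes "L2 L f" shows "integrable (Iv L) f"
proof -
  have "integrable (Iv L) (\<lambda>x. f x * 1)"
    by (rule integrable_L2_mult) (use assms int_const_Iv in \<open>auto simp: L2_def\<close>)
  then show ?thesis by simp
qed

lemma L1_bound: assumes "L2 L f" "L \<ge> 0"
  shows "integral\<^sup>L (Iv L) (\<lambda>x. \<bar>f x\<bar>) \<le> sqrt L * sqrt (integral\<^sup>L (Iv L) (\<lambda>x. (f x)\<^sup>2))"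
proof -
  have "integral\<^sup>L (Iv L) (\<lambda>x. \<bar>f x * 1\<bar>) \<le> sqrt (integral\<^sup>L (Iv L) (\<lambda>x. (f x)\<^sup>2)) * sqrt (integral\<^sup>L (Iv L) (\<lambda>x. 1\<^sup>2))"
    by (rule CS_abs) (use assms int_const_Iv in \<open>auto simp: L2_def\<close>)
  then show ?thesis using measure_Iv[OF assms(2)] by (simp add: mult.commute)
qed

lemma FTC_Iv:
  fixes F f :: "real \<Rightarrow> real"
  assumes d: "\<And>t. t \<in> {0..x} \<Longrightarrow> (F has_real_derivative f t) (at t within {0..x})"
    and c: "continuous_on {0..x} f" and x: "0 \<le> x" "x \<le> L"
  shows "integral\<^sup>L (Iv L) (\<lambda>t. f t * indicator {0<..<x} t) = F x - F 0"
proof -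
  have s1: "{0<..<L::real} \<inter> space lebesgue \<in> sets lebesgue" by simp
  have s2: "{0<..<x::real} \<inter> space lebesgue \<in> sets lebesgue" by simp
  have "integral\<^sup>L (Iv L) (\<lambda>t. f t * indicator {0<..<x} t)
      = integral\<^sup>L lebesgue (\<lambda>t. indicator {0<..<L} t *\<^sub>R (f t * indicator {0<..<x} t))"
    by (rule integral_restrict_space[OF s1])
  also have "\<dots> = integral\<^sup>L lebesgue (\<lambda>t. indicator {0<..<x} t *\<^sub>R f t)"
    by (rule Bochner_Integration.integral_cong) (use x in \<open>auto simp: indicator_def\<close>)
  also have "\<dots> = integral\<^sup>L (lebesgue_on {0<..<x}) f"
    by (rule integral_restrict_space[OF s2, symmetric])
  also have "\<dots> = integral {0<..<x} f"
  proof (rule lebesgue_integral_eq_integral)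
    have "f absolutely_integrable_on {0..x}" by (rule absolutely_integrable_continuous_real[OF c])
    then have "f absolutely_integrable_on {0<..<x}" using absolutely_integrable_on_Icc_iff_Ioo by blast
    then show "integrable (lebesgue_on {0<..<x}) f"
      by (rule absolutely_integrable_imp_integrable) simp
  qed simp
  also have "\<dots> = integral {0..x} f" by (rule integral_open_interval_real[symmetric])
  also have "\<dots> = F x - F 0"
  proof (rule integral_unique, rule fundamental_theorem_of_calculus[OF x(1)])
    fix t assume "t \<in> {0..x}"
    then show "(F has_vector_derivative f t) (at t within {0..x})"
      using d has_real_derivative_iff_has_vector_derivative by blast
  qed
  finally show ?thesis .
qed


lemma test_diff: "test_fun L \<psi> \<Longrightarrow> (\<psi> has_real_derivative deriv \<psi> t) (at t)"
  using test_fun_Sm[of L \<psi> 0] Sm_diff deriv_at by blast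

lemma test_cont: "test_fun L \<psi> \<Longrightarrow> continuous_on UNIV \<psi>"
  using test_fun_Sm[of L \<psi> 0] Sm_cont by blast

lemma test_dcont: "test_fun L \<psi> \<Longrightarrow> continuous_on UNIV (deriv \<psi>)"
proof -
  assume "test_fun L \<psi>"
  then have "Sm (Suc 0) \<psi>" using test_fun_Sm by blast
  then have "Sm 0 (deriv \<psi>)" using Sm_Suc by blast
  then show ?thesis by (rule Sm_cont)
qed

lemma test_ends: assumes "test_fun L \<psi>" shows "\<psi> 0 = 0" "\<psi> L = 0"
  using assms unfolding test_fun_def by force+

lemma cont_bounded_Iv: fixes f :: "real \<Rightarrow> real" and L :: real assumes "continuous_on UNIV f" obtains B where "B > 0" "\<And>x. x \<in> {0..L} \<Longrightarrow> \<bar>f x\<bar> \<le> B"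
proof -
  have "compact (f ` {0..L})"
    by (rule compact_continuous_image[OF continuous_on_subset[OF assms subset_UNIV] compact_Icc])
  then have "bounded (f ` {0..L})" by (rule compact_imp_bounded)
  then obtain B where B: "B > 0" "\<And>y. y \<in> f ` {0..L} \<Longrightarrow> norm y \<le> B"
    unfolding bounded_pos by metis
  have "\<And>x. x \<in> {0..L} \<Longrightarrow> \<bar>f x\<bar> \<le> B" using B(2) by simp
  then show ?thesis using that B(1) by blast
qed

lemma bounded_L2:
  assumes m: "f \<in> borel_measurable (Iv L)" and b: "\<And>x. x \<in> {0<..<L} \<Longrightarrow> \<bar>f x\<bar> \<le> B"
  shows "L2 L f"
  unfolding L2_def
proof
  show "f \<in> borel_measurable (Iv L)" by fact
  show "integrable (Iv L) (\<lambda>x. (f x)\<^sup>2)"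
  proof (rule finite_measure.integrable_const_bound[OF fm_Iv, where B="B\<^sup>2"])
    show "AE x in Iv L. norm ((f x)\<^sup>2) \<le> B\<^sup>2"
    proof (rule AE_I2)
      fix x assume "x \<in> space (Iv L)"
      then have "\<bar>f x\<bar> \<le> B" using b by simp
      then have "\<bar>f x\<bar>\<^sup>2 \<le> B\<^sup>2" by (intro power_mono) auto
      then show "norm ((f x)\<^sup>2) \<le> B\<^sup>2" by simp
    qed
    show "(\<lambda>x. (f x)\<^sup>2) \<in> borel_measurable (Iv L)" using m by measurable
  qed
qed

lemma cont_L2: "continuous_on UNIV f \<Longrightarrow> L2 L f"
proof -
  assume c: "continuous_on UNIV f"
  obtain B where "B > 0" and B: "\<And>x. x \<in> {0..L} \<Longrightarrow> \<bar>f x\<bar> \<le> B" apply (rule cont_bounded_Iv[OF c, of L]) by blast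
  show ?thesis by (rule bounded_L2[OF meas_Iv[OF c], where B=B]) (use B in auto)
qed

lemma L2_meas: "L2 L f \<Longrightarrow> f \<in> borel_measurable (Iv L)" by (simp add: L2_def)
lemma L2_sq: "L2 L f \<Longrightarrow> integrable (Iv L) (\<lambda>x. (f x)\<^sup>2)" by (simp add: L2_def)

lemma L2_mult_int: "L2 L f \<Longrightarrow> L2 L g \<Longrightarrow> integrable (Iv L) (\<lambda>x. f x * g x)"
  by (rule integrable_L2_mult) (auto simp: L2_def)

lemma L2_add: assumes "L2 L f" "L2 L g" shows "L2 L (\<lambda>x. f x + g x)"
proof -
  have "integrable (Iv L) (\<lambda>x. (f x)\<^sup>2 + (g x)\<^sup>2 + 2 * (f x * g x))"
    using assms L2_mult_int[OF assms] by (auto simp: L2_def)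
  moreover have "(\<lambda>x. f x + g x) \<in> borel_measurable (Iv L)" using assms by (auto simp: L2_def)
  ultimately show ?thesis unfolding L2_def by (simp add: power2_sum mult.assoc)
qed

lemma L2_cmult: assumes "L2 L f" shows "L2 L (\<lambda>x. c * f x)"
  using assms unfolding L2_def by (auto simp: power_mult_distrib)

lemma L2_diff: assumes "L2 L f" "L2 L g" shows "L2 L (\<lambda>x. f x - g x)"
  using L2_add[OF assms(1) L2_cmult[OF assms(2), of "-1"]] by simp

lemma test_L2: "test_fun L \<psi> \<Longrightarrow> L2 L \<psi>" using test_cont cont_L2 by blast
lemma test_dL2: "test_fun L \<psi> \<Longrightarrow> L2 L (deriv \<psi>)" using test_dcont cont_L2 by blast

lemma test_FTC: assumes "test_fun L \<psi>" "0 \<le> x" "x \<le> L"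
  shows "\<psi> x = integral\<^sup>L (Iv L) (\<lambda>t. deriv \<psi> t * indicator {0<..<x} t)"
proof -
  have "integral\<^sup>L (Iv L) (\<lambda>t. deriv \<psi> t * indicator {0<..<x} t) = \<psi> x - \<psi> 0"
  proof (rule FTC_Iv)
    show "continuous_on {0..x} (deriv \<psi>)" using test_dcont[OF assms(1)] by (rule continuous_on_subset) auto
    fix t show "(\<psi> has_real_derivative deriv \<psi> t) (at t within {0..x})"
      using test_diff[OF assms(1)] has_field_derivative_at_within by blast
  qed (use assms in auto)
  then show ?thesis using test_ends[OF assms(1)] by simp
qed

lemma L2_ind: assumes "L2 L f" shows "integrable (Iv L) (\<lambda>t. f t * indicator {0<..<x} t)"
proof -
  have "L2 L (indicator {0<..<x})"
  proof (rule bounded_L2[where B=1])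
    have a: "(\<lambda>x. x) \<in> borel_measurable (Iv L)" by (rule meas_Iv) (rule continuous_on_id)
    have b: "(indicator {0<..<x} :: real \<Rightarrow> real) \<in> borel_measurable borel"
      by (rule borel_measurable_indicator) simp
    show "(indicator {0<..<x} :: real \<Rightarrow> real) \<in> borel_measurable (Iv L)"
      using measurable_compose[OF a b] by (simp add: o_def)
  qed (auto simp: indicator_def)
  from L2_mult_int[OF assms this] show ?thesis .
qed


lemma int_ind_bound:
  assumes g: "L2 L g" and L: "L \<ge> 0"
  shows "\<bar>integral\<^sup>L (Iv L) (\<lambda>t. g t * indicator {0<..<x} t)\<bar> \<le> sqrt L * sqrt (integral\<^sup>L (Iv L) (\<lambda>t. (g t)\<^sup>2))"
proof -
  have "\<bar>integral\<^sup>L (Iv L) (\<lambda>t. g t * indicator {0<..<x} t)\<bar> \<le> integral\<^sup>L (Iv L) (\<lambda>t. \<bar>g t * indicator {0<..<x} t\<bar>)"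
    by (rule integral_abs_bound)
  also have "\<dots> \<le> integral\<^sup>L (Iv L) (\<lambda>t. \<bar>g t\<bar>)"
  proof (rule integral_mono)
    show "integrable (Iv L) (\<lambda>t. \<bar>g t * indicator {0<..<x} t\<bar>)" using L2_ind[OF g] by auto
    show "integrable (Iv L) (\<lambda>t. \<bar>g t\<bar>)" using L2_integrable[OF g] by auto
  qed (auto simp: indicator_def abs_mult)
  also have "\<dots> \<le> sqrt L * sqrt (integral\<^sup>L (Iv L) (\<lambda>t. (g t)\<^sup>2))" by (rule L1_bound[OF g L])
  finally show ?thesis .
qed

lemma sq_le2: "(a + b)\<^sup>2 \<le> 2 * a\<^sup>2 + 2 * (b::real)\<^sup>2"
proof -
  have "0 \<le> (a - b)\<^sup>2" by simp
  then show ?thesis by (simp add: power2_sum power2_diff)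
qed

locale hd =
  fixes L :: real and u v0 :: "real \<Rightarrow> real" and \<psi>s :: "nat \<Rightarrow> real \<Rightarrow> real"
  assumes Lpos: "L > 0" and uL2: "L2 L u" and v0L2: "L2 L v0" and wd: "weak_deriv L u v0"
    and tf: "\<And>n. test_fun L (\<psi>s n)"
    and c1: "(\<lambda>n. integral\<^sup>L (Iv L) (\<lambda>x. (\<psi>s n x - u x)\<^sup>2)) \<longlonglongrightarrow> 0"
    and c2: "(\<lambda>n. integral\<^sup>L (Iv L) (\<lambda>x. (deriv (\<psi>s n) x - v0 x)\<^sup>2)) \<longlonglongrightarrow> 0"
begin

definition U where "U x = integral\<^sup>L (Iv L) (\<lambda>t. v0 t * indicator {0<..<x} t)"
definition e where "e n = sqrt L * sqrt (integral\<^sup>L (Iv L) (\<lambda>x. (deriv (\<psi>s n) x - v0 x)\<^sup>2))"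

lemma e_lim: "e \<longlonglongrightarrow> 0"
  unfolding e_def using tendsto_mult[OF tendsto_const tendsto_real_sqrt[OF c2]] by simp

lemma e_nonneg: "e n \<ge> 0"
  unfolding e_def using Lpos by (auto intro!: mult_nonneg_nonneg)

lemma unif: assumes "x \<in> {0..L}" shows "\<bar>\<psi>s n x - U x\<bar> \<le> e n"
proof -
  have d: "L2 L (\<lambda>t. deriv (\<psi>s n) t - v0 t)" by (rule L2_diff[OF test_dL2[OF tf] v0L2])
  have "\<psi>s n x - U x = integral\<^sup>L (Iv L) (\<lambda>t. deriv (\<psi>s n) t * indicator {0<..<x} t) - integral\<^sup>L (Iv L) (\<lambda>t. v0 t * indicator {0<..<x} t)"
    using test_FTC[OF tf, of x n] assms by (simp add: U_def)
  also have "\<dots> = integral\<^sup>L (Iv L) (\<lambda>t. (deriv (\<psi>s n) t - v0 t) * indicator {0<..<x} t)"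
    using L2_ind[OF test_dL2[OF tf]] L2_ind[OF v0L2]
    by (subst Bochner_Integration.integral_diff[symmetric]) (auto simp: left_diff_distrib)
  finally show ?thesis using int_ind_bound[OF d] Lpos by (simp add: e_def)
qed

lemma pw: assumes "x \<in> {0..L}" shows "(\<lambda>n. \<psi>s n x) \<longlonglongrightarrow> U x"
proof (rule LIM_zero_cancel, rule Lim_null_comparison[OF _ e_lim])
  show "\<forall>\<^sub>F n in sequentially. norm (\<psi>s n x - U x) \<le> e n" using unif[OF assms] by simp
qed

lemma U_meas: "U \<in> borel_measurable (Iv L)"
proof (rule borel_measurable_LIMSEQ_real[where u="\<lambda>n. \<psi>s n"])
  fix x assume "x \<in> space (Iv L)"
  then show "(\<lambda>n. \<psi>s n x) \<longlonglongrightarrow> U x" by (intro pw) auto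
next
  fix n show "\<psi>s n \<in> borel_measurable (Iv L)" by (rule meas_Iv[OF test_cont[OF tf]])
qed

lemma UL: "U L = 0"
proof -
  have "(\<lambda>n. \<psi>s n L) \<longlonglongrightarrow> U L" using pw Lpos by auto
  moreover have "\<psi>s n L = 0" for n using test_ends[OF tf] by blast
  ultimately show ?thesis using LIMSEQ_unique[OF _ tendsto_const] by simp
qed

definition K where "K = sqrt L * sqrt (integral\<^sup>L (Iv L) (\<lambda>t. (v0 t)\<^sup>2))"

lemma U_bound: "\<bar>U x\<bar> \<le> K"
  unfolding U_def K_def using int_ind_bound[OF v0L2] Lpos by simp

lemma U_L2: "L2 L U" by (rule bounded_L2[OF U_meas, where B=K]) (rule U_bound)

lemma u_U: "AE x in Iv L. u x = U x"
proof -
  define D where "D = integral\<^sup>L (Iv L) (\<lambda>x. (u x - U x)\<^sup>2)"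
  have uU: "L2 L (\<lambda>x. u x - U x)" by (rule L2_diff[OF uL2 U_L2])
  have bnd: "D \<le> 2 * integral\<^sup>L (Iv L) (\<lambda>x. (\<psi>s n x - u x)\<^sup>2) + 2 * (e n)\<^sup>2 * L" for n
  proof -
    have pu: "L2 L (\<lambda>x. \<psi>s n x - u x)" by (rule L2_diff[OF test_L2[OF tf] uL2])
    have "D \<le> integral\<^sup>L (Iv L) (\<lambda>x. 2 * (\<psi>s n x - u x)\<^sup>2 + 2 * (e n)\<^sup>2)"
      unfolding D_def
    proof (rule integral_mono)
      show "integrable (Iv L) (\<lambda>x. (u x - U x)\<^sup>2)" using uU by (simp add: L2_def)
      show "integrable (Iv L) (\<lambda>x. 2 * (\<psi>s n x - u x)\<^sup>2 + 2 * (e n)\<^sup>2)"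
        using pu int_const_Iv by (intro Bochner_Integration.integrable_add integrable_mult_right) (auto simp: L2_def)
      fix x assume "x \<in> space (Iv L)"
      then have "\<bar>\<psi>s n x - U x\<bar> \<le> e n" by (intro unif) auto
      then have "\<bar>\<psi>s n x - U x\<bar>\<^sup>2 \<le> (e n)\<^sup>2" by (intro power_mono) auto
      then have a: "(\<psi>s n x - U x)\<^sup>2 \<le> (e n)\<^sup>2" by simp
      have "(u x - U x)\<^sup>2 \<le> 2 * (\<psi>s n x - u x)\<^sup>2 + 2 * (\<psi>s n x - U x)\<^sup>2"
        using sq_le2[of "u x - \<psi>s n x" "\<psi>s n x - U x"] by (simp add: power2_commute)
      then show "(u x - U x)\<^sup>2 \<le> 2 * (\<psi>s n x - u x)\<^sup>2 + 2 * (e n)\<^sup>2" using a by linarith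
    qed
    also have "\<dots> = 2 * integral\<^sup>L (Iv L) (\<lambda>x. (\<psi>s n x - u x)\<^sup>2) + 2 * (e n)\<^sup>2 * L"
    proof -
      have "integral\<^sup>L (Iv L) (\<lambda>x. 2 * (\<psi>s n x - u x)\<^sup>2 + 2 * (e n)\<^sup>2)
          = integral\<^sup>L (Iv L) (\<lambda>x. 2 * (\<psi>s n x - u x)\<^sup>2) + integral\<^sup>L (Iv L) (\<lambda>x. 2 * (e n)\<^sup>2)"
        using pu int_const_Iv by (intro Bochner_Integration.integral_add integrable_mult_right) (auto simp: L2_def)
      also have "\<dots> = 2 * integral\<^sup>L (Iv L) (\<lambda>x. (\<psi>s n x - u x)\<^sup>2) + 2 * (e n)\<^sup>2 * L"
        using measure_Iv[of L] Lpos by simp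
      finally show ?thesis .
    qed
    finally show ?thesis .
  qed
  have lim: "(\<lambda>n. 2 * integral\<^sup>L (Iv L) (\<lambda>x. (\<psi>s n x - u x)\<^sup>2) + 2 * (e n)\<^sup>2 * L) \<longlonglongrightarrow> 0"
  proof -
    have "(\<lambda>n. 2 * integral\<^sup>L (Iv L) (\<lambda>x. (\<psi>s n x - u x)\<^sup>2) + 2 * (e n)\<^sup>2 * L) \<longlonglongrightarrow> 2 * 0 + 2 * 0\<^sup>2 * L"
      by (intro tendsto_intros c1 e_lim)
    then show ?thesis by simp
  qed
  have "D \<le> 0" by (rule LIMSEQ_le_const[OF lim]) (use bnd in blast)
  moreover have "D \<ge> 0" unfolding D_def by simp
  ultimately have "D = 0" by simp
  then have "AE x in Iv L. (u x - U x)\<^sup>2 = 0"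
    using integral_nonneg_eq_0_iff_AE[of "Iv L" "\<lambda>x. (u x - U x)\<^sup>2"] uU unfolding D_def by (simp add: L2_def)
  then show ?thesis by eventually_elim simp
qed

lemma v_v0: assumes "L2 L v" "weak_deriv L u v" shows "AE x in Iv L. v x = v0 x"
proof -
  have w: "integrable (Iv L) (\<lambda>x. v x - v0 x)" by (rule L2_integrable[OF L2_diff[OF assms(1) v0L2]])
  have "AE x in Iv L. v x - v0 x = 0"
  proof (rule fundamental[OF Lpos w])
    fix \<psi> assume t: "test_fun L \<psi>"
    have "integral\<^sup>L (Iv L) (\<lambda>x. (v x - v0 x) * \<psi> x) = integral\<^sup>L (Iv L) (\<lambda>x. v x * \<psi> x) - integral\<^sup>L (Iv L) (\<lambda>x. v0 x * \<psi> x)"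
      using L2_mult_int[OF assms(1) test_L2[OF t]] L2_mult_int[OF v0L2 test_L2[OF t]]
      by (subst Bochner_Integration.integral_diff[symmetric]) (auto simp: left_diff_distrib)
    also have "\<dots> = 0"
    proof -
      have "integral\<^sup>L (Iv L) (\<lambda>x. u x * deriv \<psi> x) = - integral\<^sup>L (Iv L) (\<lambda>x. v x * \<psi> x)"
        using assms(2) t unfolding weak_deriv_def by blast
      moreover have "integral\<^sup>L (Iv L) (\<lambda>x. u x * deriv \<psi> x) = - integral\<^sup>L (Iv L) (\<lambda>x. v0 x * \<psi> x)"
        using wd t unfolding weak_deriv_def by blast
      ultimately show ?thesis by simp
    qed
    finally show "integral\<^sup>L (Iv L) (\<lambda>x. (v x - v0 x) * \<psi> x) = 0" .
  qed
  then show ?thesis by eventually_elim simp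
qed

end

lemma cont_bounded_Icc: fixes f :: "real \<Rightarrow> real" and a b :: real assumes "continuous_on UNIV f"
  obtains B where "B > 0" "\<And>x. x \<in> {a..b} \<Longrightarrow> \<bar>f x\<bar> \<le> B"
proof -
  have "compact (f ` {a..b})"
    by (rule compact_continuous_image[OF continuous_on_subset[OF assms subset_UNIV] compact_Icc])
  then have "bounded (f ` {a..b})" by (rule compact_imp_bounded)
  then obtain B where B: "B > 0" "\<And>y. y \<in> f ` {a..b} \<Longrightarrow> norm y \<le> B"
    unfolding bounded_pos by metis
  have "\<And>x. x \<in> {a..b} \<Longrightarrow> \<bar>f x\<bar> \<le> B" using B(2) by simp
  then show ?thesis using that B(1) by blast
qed

lemma chain_n:
  assumes h: "continuous_on UNIV h" and t: "test_fun L \<psi>" and L: "L > 0"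
  shows "integral\<^sup>L (Iv L) (\<lambda>x. h (\<psi> x) * deriv \<psi> x) = 0"
proof -
  obtain R where "R > 0" and R: "\<And>x. x \<in> {0..L} \<Longrightarrow> \<bar>\<psi> x\<bar> \<le> R"
    apply (rule cont_bounded_Iv[OF test_cont[OF t], of L]) by blast
  define R' where "R' = R + 1"
  define H where "H s = integral {-R'..s} h" for s
  have Hd: "(H has_real_derivative h s) (at s)" if s: "s \<in> {-R'<..<R'}" for s
  proof -
    have "(H has_real_derivative h s) (at s within {-R'..R'})"
      unfolding H_def[abs_def]
      by (rule integral_has_real_derivative[OF continuous_on_subset[OF h subset_UNIV]]) (use s in auto)
    moreover have "at s within {-R'..R'} = at s"
      by (rule at_within_interior) (use s in simp)
    ultimately show ?thesis by simp
  qed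
  have cf: "continuous_on UNIV (\<lambda>t. h (\<psi> t) * deriv \<psi> t)"
    by (intro continuous_on_mult continuous_on_compose2[OF h test_cont[OF t]] test_dcont[OF t]) auto
  have "integral\<^sup>L (Iv L) (\<lambda>t. h (\<psi> t) * deriv \<psi> t * indicator {0<..<L} t) = H (\<psi> L) - H (\<psi> 0)"
  proof (rule FTC_Iv)
    fix t assume tt: "t \<in> {0..L}"
    have "\<psi> t \<in> {-R'<..<R'}" using R[OF tt] by (auto simp: R'_def)
    from DERIV_chain2[OF Hd[OF this] test_diff[OF t]]
    show "((\<lambda>t. H (\<psi> t)) has_real_derivative h (\<psi> t) * deriv \<psi> t) (at t within {0..L})"
      using has_field_derivative_at_within by blast
  next
    show "continuous_on {0..L} (\<lambda>t. h (\<psi> t) * deriv \<psi> t)" using cf by (rule continuous_on_subset) auto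
  qed (use L in auto)
  moreover have "integral\<^sup>L (Iv L) (\<lambda>t. h (\<psi> t) * deriv \<psi> t * indicator {0<..<L} t) = integral\<^sup>L (Iv L) (\<lambda>x. h (\<psi> x) * deriv \<psi> x)"
    by (rule Bochner_Integration.integral_cong) auto
  ultimately show ?thesis using test_ends[OF t] by simp
qed

context hd begin

lemma K_nonneg: "K \<ge> 0" unfolding K_def using Lpos by simp

lemma chain0: assumes h: "continuous_on UNIV h"
  shows "integral\<^sup>L (Iv L) (\<lambda>x. h (U x) * v0 x) = 0"
proof -
  obtain N where N: "\<And>n. n \<ge> N \<Longrightarrow> e n < 1"
    using order_tendstoD(2)[OF e_lim, of 1] unfolding eventually_sequentially by auto
  obtain M where "M > 0" and M: "\<And>s. s \<in> {-(K+1)..K+1} \<Longrightarrow> \<bar>h s\<bar> \<le> M"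
    apply (rule cont_bounded_Icc[OF h, of "-(K+1)" "K+1"]) by blast
  have psr: "\<psi>s n x \<in> {-(K+1)..K+1}" if "n \<ge> N" "x \<in> {0..L}" for n x
  proof -
    have "\<bar>\<psi>s n x - U x\<bar> \<le> e n" by (rule unif[OF that(2)])
    then have "\<bar>\<psi>s n x\<bar> \<le> K + 1" using U_bound[of x] N[OF that(1)] by linarith
    then show ?thesis by auto
  qed
  have Ur: "U x \<in> {-(K+1)..K+1}" for x using U_bound[of x] by auto
  have hUm: "(\<lambda>x. h (U x)) \<in> borel_measurable (Iv L)"
    by (rule measurable_compose[OF U_meas borel_measurable_continuous_onI[OF h]])
  have hU: "L2 L (\<lambda>x. h (U x))"
    by (rule bounded_L2[OF hUm, where B=M]) (use M Ur in blast)
  have hpc: "continuous_on UNIV (\<lambda>x. h (\<psi>s n x))" for n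
    by (rule continuous_on_compose2[OF h test_cont[OF tf]]) auto
  have hp: "L2 L (\<lambda>x. h (\<psi>s n x))" for n by (rule cont_L2[OF hpc])
  have dv: "L2 L (\<lambda>x. deriv (\<psi>s n) x - v0 x)" for n by (rule L2_diff[OF test_dL2[OF tf] v0L2])
  define s where "s i x = (h (\<psi>s (i + N) x) - h (U x)) * v0 x" for i x
  have sL: "(\<lambda>i. integral\<^sup>L (Iv L) (s i)) \<longlonglongrightarrow> integral\<^sup>L (Iv L) (\<lambda>x. 0)"
  proof (rule integral_dominated_convergence[where w="\<lambda>x. 2 * M * \<bar>v0 x\<bar>"])
    show "(\<lambda>x. 0::real) \<in> borel_measurable (Iv L)" by simp
    show "s i \<in> borel_measurable (Iv L)" for i
      unfolding s_def using hp[of "i+N"] hU v0L2 by (auto simp: L2_def)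
    show "integrable (Iv L) (\<lambda>x. 2 * M * \<bar>v0 x\<bar>)" using L2_integrable[OF v0L2] by auto
    show "AE x in Iv L. (\<lambda>i. s i x) \<longlonglongrightarrow> 0"
    proof (rule AE_I2)
      fix x assume "x \<in> space (Iv L)"
      then have x: "x \<in> {0..L}" by auto
      have "isCont h (U x)" using h by (simp add: continuous_on_eq_continuous_at)
      moreover have "(\<lambda>i. \<psi>s (i + N) x) \<longlonglongrightarrow> U x" using LIMSEQ_ignore_initial_segment[OF pw[OF x], of N] .
      ultimately have "(\<lambda>i. h (\<psi>s (i + N) x)) \<longlonglongrightarrow> h (U x)" by (rule isCont_tendsto_compose)
      then have "(\<lambda>i. (h (\<psi>s (i + N) x) - h (U x)) * v0 x) \<longlonglongrightarrow> (h (U x) - h (U x)) * v0 x"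
        by (intro tendsto_intros)
      then show "(\<lambda>i. s i x) \<longlonglongrightarrow> 0" by (simp add: s_def)
    qed
    show "AE x in Iv L. norm (s i x) \<le> 2 * M * \<bar>v0 x\<bar>" for i
    proof (rule AE_I2)
      fix x assume "x \<in> space (Iv L)"
      then have x: "x \<in> {0..L}" by auto
      have "\<bar>h (\<psi>s (i + N) x)\<bar> \<le> M" using M psr[OF _ x, of "i+N"] by simp
      moreover have "\<bar>h (U x)\<bar> \<le> M" using M Ur by blast
      ultimately have "\<bar>h (\<psi>s (i + N) x) - h (U x)\<bar> \<le> 2 * M" by linarith
      then have "\<bar>h (\<psi>s (i + N) x) - h (U x)\<bar> * \<bar>v0 x\<bar> \<le> 2 * M * \<bar>v0 x\<bar>" by (rule mult_right_mono) simp
      then show "norm (s i x) \<le> 2 * M * \<bar>v0 x\<bar>" by (simp add: s_def abs_mult)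
    qed
  qed
  define A where "A = integral\<^sup>L (Iv L) (\<lambda>x. h (U x) * v0 x)"
  have Ab: "\<bar>A\<bar> \<le> \<bar>integral\<^sup>L (Iv L) (s i)\<bar> + M * e (i + N)" for i
  proof -
    define n where "n = i + N"
    have i1: "integrable (Iv L) (s i)" unfolding s_def n_def[symmetric]
      by (rule L2_mult_int[OF L2_diff[OF hp hU] v0L2])
    have i2: "integrable (Iv L) (\<lambda>x. h (U x) * v0 x)" by (rule L2_mult_int[OF hU v0L2])
    have i3: "integrable (Iv L) (\<lambda>x. h (\<psi>s n x) * (deriv (\<psi>s n) x - v0 x))" by (rule L2_mult_int[OF hp dv])
    have "0 = integral\<^sup>L (Iv L) (\<lambda>x. h (\<psi>s n x) * deriv (\<psi>s n) x)" by (rule chain_n[OF h tf Lpos, symmetric])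
    also have "\<dots> = integral\<^sup>L (Iv L) (\<lambda>x. s i x + h (U x) * v0 x + h (\<psi>s n x) * (deriv (\<psi>s n) x - v0 x))"
      by (rule Bochner_Integration.integral_cong) (auto simp: s_def n_def algebra_simps)
    also have "\<dots> = integral\<^sup>L (Iv L) (s i) + A + integral\<^sup>L (Iv L) (\<lambda>x. h (\<psi>s n x) * (deriv (\<psi>s n) x - v0 x))"
      unfolding A_def using i1 i2 i3 by simp
    finally have eq: "A = - integral\<^sup>L (Iv L) (s i) - integral\<^sup>L (Iv L) (\<lambda>x. h (\<psi>s n x) * (deriv (\<psi>s n) x - v0 x))"
      by linarith
    have "\<bar>integral\<^sup>L (Iv L) (\<lambda>x. h (\<psi>s n x) * (deriv (\<psi>s n) x - v0 x))\<bar>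
        \<le> integral\<^sup>L (Iv L) (\<lambda>x. \<bar>h (\<psi>s n x) * (deriv (\<psi>s n) x - v0 x)\<bar>)"
      by (rule integral_abs_bound)
    also have "\<dots> \<le> integral\<^sup>L (Iv L) (\<lambda>x. M * \<bar>deriv (\<psi>s n) x - v0 x\<bar>)"
    proof (rule integral_mono)
      show "integrable (Iv L) (\<lambda>x. \<bar>h (\<psi>s n x) * (deriv (\<psi>s n) x - v0 x)\<bar>)" using i3 by auto
      show "integrable (Iv L) (\<lambda>x. M * \<bar>deriv (\<psi>s n) x - v0 x\<bar>)" using L2_integrable[OF dv] by auto
      fix x assume "x \<in> space (Iv L)"
      then have x: "x \<in> {0..L}" by auto
      have "\<bar>h (\<psi>s n x)\<bar> \<le> M" using M psr[OF _ x, of n] by (simp add: n_def)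
      then show "\<bar>h (\<psi>s n x) * (deriv (\<psi>s n) x - v0 x)\<bar> \<le> M * \<bar>deriv (\<psi>s n) x - v0 x\<bar>"
        by (simp add: abs_mult mult_right_mono)
    qed
    also have "\<dots> = M * integral\<^sup>L (Iv L) (\<lambda>x. \<bar>deriv (\<psi>s n) x - v0 x\<bar>)" by simp
    also have "\<dots> \<le> M * e n"
      unfolding e_def using L1_bound[OF dv] Lpos \<open>M > 0\<close> by (intro mult_left_mono) auto
    finally have "\<bar>integral\<^sup>L (Iv L) (\<lambda>x. h (\<psi>s n x) * (deriv (\<psi>s n) x - v0 x))\<bar> \<le> M * e n" .
    then show ?thesis using eq by (simp add: n_def)
  qed
  have lim: "(\<lambda>i. \<bar>integral\<^sup>L (Iv L) (s i)\<bar> + M * e (i + N)) \<longlonglongrightarrow> 0"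
  proof -
    have "(\<lambda>i. \<bar>integral\<^sup>L (Iv L) (s i)\<bar> + M * e (i + N)) \<longlonglongrightarrow> \<bar>0\<bar> + M * 0"
      using sL LIMSEQ_ignore_initial_segment[OF e_lim, of N] by (intro tendsto_intros) auto
    then show ?thesis by simp
  qed
  have "\<bar>A\<bar> \<le> 0" by (rule LIMSEQ_le_const[OF lim]) (use Ab in blast)
  then show ?thesis unfolding A_def by simp
qed

end

context hd begin

lemma phi0:
  fixes \<phi> :: "real \<Rightarrow> ereal"
  assumes \<phi>c: "continuous_on UNIV \<phi>" and \<phi>m: "\<forall>s. \<phi> s \<noteq> -\<infinity>"
    and \<phi>ae: "AE x in Iv L. \<phi> (u x) \<noteq> \<infinity>" and \<phi>L2: "L2 L (\<lambda>x. real_of_ereal (\<phi> (u x)))"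
  shows "integral\<^sup>L (Iv L) (\<lambda>x. real_of_ereal (\<phi> (u x)) * v0 x) = 0"
proof -
  define hM where "hM n s = real_of_ereal (min (\<phi> s) (ereal (real n)))" for n s
  have fin: "min (\<phi> s) (ereal (real n)) = ereal (hM n s)" for n s
  proof -
    have "min (\<phi> s) (ereal (real n)) \<noteq> \<infinity>" by (cases "\<phi> s") (auto simp: min_def)
    moreover have "min (\<phi> s) (ereal (real n)) \<noteq> -\<infinity>" using \<phi>m by (simp add: min_def)
    ultimately show ?thesis unfolding hM_def by (cases "min (\<phi> s) (ereal (real n))") auto
  qed
  have hc: "continuous_on UNIV (hM n)" for n
  proof -
    have "isCont (hM n) s" for s
    proof -
      have "(\<phi> \<longlongrightarrow> \<phi> s) (at s)" using \<phi>c unfolding continuous_on_def by simp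
      then have "((\<lambda>t. min (\<phi> t) (ereal (real n))) \<longlongrightarrow> min (\<phi> s) (ereal (real n))) (at s)"
        by (intro tendsto_min tendsto_const)
      then have "((\<lambda>t. min (\<phi> t) (ereal (real n))) \<longlongrightarrow> ereal (hM n s)) (at s)" by (simp add: fin)
      then have "((\<lambda>t. real_of_ereal (min (\<phi> t) (ereal (real n)))) \<longlongrightarrow> hM n s) (at s)"
        by (rule lim_real_of_ereal)
      then show ?thesis unfolding isCont_def hM_def .
    qed
    then show ?thesis by (simp add: continuous_on_eq_continuous_at)
  qed
  have z: "integral\<^sup>L (Iv L) (\<lambda>x. hM n (U x) * v0 x) = 0" for n by (rule chain0[OF hc])
  have \<phi>meas: "\<phi> \<in> borel_measurable borel" by (rule borel_measurable_continuous_onI[OF \<phi>c])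
  have Ufm: "(\<lambda>x. \<phi> (U x)) \<in> borel_measurable (Iv L)" by (rule measurable_compose[OF U_meas \<phi>meas])
  have v0m: "v0 \<in> borel_measurable (Iv L)" using v0L2 by (simp add: L2_def)
  have lim: "(\<lambda>n. integral\<^sup>L (Iv L) (\<lambda>x. hM n (U x) * v0 x)) \<longlonglongrightarrow> integral\<^sup>L (Iv L) (\<lambda>x. real_of_ereal (\<phi> (U x)) * v0 x)"
  proof (rule integral_dominated_convergence[where w="\<lambda>x. \<bar>real_of_ereal (\<phi> (u x)) * v0 x\<bar>"])
    show "(\<lambda>x. real_of_ereal (\<phi> (U x)) * v0 x) \<in> borel_measurable (Iv L)" using Ufm v0m by measurable
    show "(\<lambda>x. hM n (U x) * v0 x) \<in> borel_measurable (Iv L)" for n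
      using measurable_compose[OF U_meas borel_measurable_continuous_onI[OF hc[of n]]] v0m by measurable
    show "integrable (Iv L) (\<lambda>x. \<bar>real_of_ereal (\<phi> (u x)) * v0 x\<bar>)"
      using L2_mult_int[OF \<phi>L2 v0L2] by auto
    show "AE x in Iv L. (\<lambda>n. hM n (U x) * v0 x) \<longlonglongrightarrow> real_of_ereal (\<phi> (U x)) * v0 x"
      using \<phi>ae u_U
    proof eventually_elim
      case (elim x)
      then have "\<phi> (U x) \<noteq> \<infinity>" by simp
      moreover have "\<phi> (U x) \<noteq> -\<infinity>" using \<phi>m by simp
      ultimately obtain r where r: "\<phi> (U x) = ereal r" by (cases "\<phi> (U x)") auto
      obtain N :: nat where "r \<le> real N" using real_arch_simple by blast
      then have "\<forall>n\<ge>N. hM n (U x) * v0 x = real_of_ereal (\<phi> (U x)) * v0 x"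
        by (auto simp: hM_def r min_def)
      then have "\<forall>\<^sub>F n in sequentially. hM n (U x) * v0 x = real_of_ereal (\<phi> (U x)) * v0 x"
        unfolding eventually_sequentially by blast
      then show ?case by (rule tendsto_eventually)
    qed
    show "AE x in Iv L. norm (hM n (U x) * v0 x) \<le> \<bar>real_of_ereal (\<phi> (u x)) * v0 x\<bar>" for n
      using \<phi>ae u_U
    proof eventually_elim
      case (elim x)
      then have "\<phi> (U x) \<noteq> \<infinity>" by simp
      moreover have "\<phi> (U x) \<noteq> -\<infinity>" using \<phi>m by simp
      ultimately obtain r where r: "\<phi> (U x) = ereal r" by (cases "\<phi> (U x)") auto
      have "\<bar>hM n (U x)\<bar> \<le> \<bar>r\<bar>"
        by (cases "r \<le> real n") (auto simp: hM_def r min_def)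
      then have "\<bar>hM n (U x)\<bar> * \<bar>v0 x\<bar> \<le> \<bar>r\<bar> * \<bar>v0 x\<bar>" by (rule mult_right_mono) simp
      then show ?case using elim r by (simp add: abs_mult)
    qed
  qed
  then have "integral\<^sup>L (Iv L) (\<lambda>x. real_of_ereal (\<phi> (U x)) * v0 x) = 0"
    using z LIMSEQ_unique[OF _ tendsto_const] by simp
  moreover have "integral\<^sup>L (Iv L) (\<lambda>x. real_of_ereal (\<phi> (u x)) * v0 x) = integral\<^sup>L (Iv L) (\<lambda>x. real_of_ereal (\<phi> (U x)) * v0 x)"
    using u_U by (intro integral_cong_AE) (use \<phi>L2 v0L2 Ufm v0m in \<open>auto simp: L2_def\<close>)
  ultimately show ?thesis by simp
qed

lemma lim_test: assumes "L2 L F"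
  shows "(\<lambda>n. integral\<^sup>L (Iv L) (\<lambda>x. F x * deriv (\<psi>s n) x)) \<longlonglongrightarrow> integral\<^sup>L (Iv L) (\<lambda>x. F x * v0 x)"
proof (rule LIM_zero_cancel, rule Lim_null_comparison)
  let ?b = "\<lambda>n. sqrt (integral\<^sup>L (Iv L) (\<lambda>x. (F x)\<^sup>2)) * sqrt (integral\<^sup>L (Iv L) (\<lambda>x. (deriv (\<psi>s n) x - v0 x)\<^sup>2))"
  show "\<forall>\<^sub>F n in sequentially. norm (integral\<^sup>L (Iv L) (\<lambda>x. F x * deriv (\<psi>s n) x) - integral\<^sup>L (Iv L) (\<lambda>x. F x * v0 x)) \<le> ?b n"
  proof (rule always_eventually, rule allI)
    fix n
    have dv: "L2 L (\<lambda>x. deriv (\<psi>s n) x - v0 x)" by (rule L2_diff[OF test_dL2[OF tf] v0L2])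
    have "integral\<^sup>L (Iv L) (\<lambda>x. F x * deriv (\<psi>s n) x) - integral\<^sup>L (Iv L) (\<lambda>x. F x * v0 x)
        = integral\<^sup>L (Iv L) (\<lambda>x. F x * (deriv (\<psi>s n) x - v0 x))"
      using L2_mult_int[OF assms test_dL2[OF tf]] L2_mult_int[OF assms v0L2]
      by (subst Bochner_Integration.integral_diff[symmetric]) (auto simp: right_diff_distrib)
    also have "\<bar>\<dots>\<bar> \<le> ?b n" by (rule CS) (use assms dv in \<open>auto simp: L2_def\<close>)
    finally show "norm (integral\<^sup>L (Iv L) (\<lambda>x. F x * deriv (\<psi>s n) x) - integral\<^sup>L (Iv L) (\<lambda>x. F x * v0 x)) \<le> ?b n"
      by simp
  qed
  have "?b \<longlonglongrightarrow> sqrt (integral\<^sup>L (Iv L) (\<lambda>x. (F x)\<^sup>2)) * sqrt 0"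
    by (intro tendsto_intros c2)
  then show "?b \<longlonglongrightarrow> 0" by simp
qed

end

theorem mainTheorem17:
  fixes L \<alpha> \<beta> :: real and a g u v :: "real \<Rightarrow> real" and \<phi> :: "real \<Rightarrow> ereal"
  assumes "L > 0"
    and "a \<in> borel_measurable (Iv L)" and "0 < \<alpha>" and "\<alpha> < \<beta>"
    and "AE x in Iv L. \<alpha> \<le> a x \<and> a x \<le> \<beta>"
    and "L2 L g"
    and "continuous_on UNIV \<phi>" and "\<forall>s. \<phi> s \<noteq> -\<infinity>" and "\<forall>s. s \<noteq> 0 \<longrightarrow> \<phi> s \<noteq> \<infinity>"
    and "weak_solution L a g \<phi> u"
    and "L2 L v" and "weak_deriv L u v"
  shows "integral\<^sup>L (Iv L) (\<lambda>x. a x * (v x)\<^sup>2) = integral\<^sup>L (Iv L) (\<lambda>x. g x * v x) \<and>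
      L2norm L v \<le> (1 / \<alpha>) * L2norm L g \<and>
      (AE x in Iv L. \<bar>u x\<bar> \<le> sqrt L / \<alpha> * L2norm L g)"
proof -
  note Lpos = assms(1) and am = assms(2) and \<alpha>pos = assms(3) and aB = assms(5) and gL2 = assms(6)
    and \<phi>c = assms(7) and \<phi>m = assms(8) and ws = assms(10) and vL2 = assms(11) and vd = assms(12)
  have H: "H10 L u" and \<phi>ae: "AE x in Iv L. \<phi> (u x) \<noteq> \<infinity>"
    and \<phi>L2: "L2 L (\<lambda>x. real_of_ereal (\<phi> (u x)))"
    and WE: "\<And>v \<psi>. L2 L v \<Longrightarrow> weak_deriv L u v \<Longrightarrow> test_fun L \<psi> \<Longrightarrow>
        integral\<^sup>L (Iv L) (\<lambda>x. a x * v x * deriv \<psi> x) =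
          integral\<^sup>L (Iv L) (\<lambda>x. real_of_ereal (\<phi> (u x)) * deriv \<psi> x)
          + integral\<^sup>L (Iv L) (\<lambda>x. g x * deriv \<psi> x)"
    using ws unfolding weak_solution_def by blast+
  obtain v0 \<psi>s where uL2: "L2 L u" and v0L2: "L2 L v0" and wd: "weak_deriv L u v0"
    and tf: "\<And>n. test_fun L (\<psi>s n)"
    and c1: "(\<lambda>n. integral\<^sup>L (Iv L) (\<lambda>x. (\<psi>s n x - u x)\<^sup>2)) \<longlonglongrightarrow> 0"
    and c2: "(\<lambda>n. integral\<^sup>L (Iv L) (\<lambda>x. (deriv (\<psi>s n) x - v0 x)\<^sup>2)) \<longlonglongrightarrow> 0"
    using H unfolding H10_def by blast
  interpret hd L u v0 \<psi>s
    by (unfold_locales) (use Lpos uL2 v0L2 wd tf c1 c2 in auto)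
  have vv0: "AE x in Iv L. v x = v0 x" by (rule v_v0[OF vL2 vd])
  have vm: "v \<in> borel_measurable (Iv L)" and v0m: "v0 \<in> borel_measurable (Iv L)"
    using vL2 v0L2 by (auto simp: L2_def)
  have av: "L2 L (\<lambda>x. a x * v x)"
    unfolding L2_def
  proof
    show avm: "(\<lambda>x. a x * v x) \<in> borel_measurable (Iv L)" using am vm by measurable
    show "integrable (Iv L) (\<lambda>x. (a x * v x)\<^sup>2)"
    proof (rule Bochner_Integration.integrable_bound[where f="\<lambda>x. \<beta>\<^sup>2 * (v x)\<^sup>2"])
      show "integrable (Iv L) (\<lambda>x. \<beta>\<^sup>2 * (v x)\<^sup>2)" using vL2 by (auto simp: L2_def)
      show "(\<lambda>x. (a x * v x)\<^sup>2) \<in> borel_measurable (Iv L)" using avm by measurable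
      show "AE x in Iv L. norm ((a x * v x)\<^sup>2) \<le> norm (\<beta>\<^sup>2 * (v x)\<^sup>2)"
        using aB
      proof eventually_elim
        case (elim x)
        then have "\<bar>a x\<bar> \<le> \<beta>" using \<alpha>pos by auto
        then have "\<bar>a x\<bar>\<^sup>2 \<le> \<beta>\<^sup>2" by (intro power_mono) auto
        then have "(a x)\<^sup>2 * (v x)\<^sup>2 \<le> \<beta>\<^sup>2 * (v x)\<^sup>2" by (intro mult_right_mono) auto
        then show ?case by (simp add: power_mult_distrib)
      qed
    qed
  qed
  have P0: "integral\<^sup>L (Iv L) (\<lambda>x. real_of_ereal (\<phi> (u x)) * v0 x) = 0"
    by (rule phi0[OF \<phi>c \<phi>m \<phi>ae \<phi>L2])
  have eqn: "integral\<^sup>L (Iv L) (\<lambda>x. a x * v x * deriv (\<psi>s n) x) =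
      integral\<^sup>L (Iv L) (\<lambda>x. real_of_ereal (\<phi> (u x)) * deriv (\<psi>s n) x)
      + integral\<^sup>L (Iv L) (\<lambda>x. g x * deriv (\<psi>s n) x)" for n
    by (rule WE[OF vL2 vd tf])
  have "(\<lambda>n. integral\<^sup>L (Iv L) (\<lambda>x. a x * v x * deriv (\<psi>s n) x)) \<longlonglongrightarrow>
      integral\<^sup>L (Iv L) (\<lambda>x. real_of_ereal (\<phi> (u x)) * v0 x) + integral\<^sup>L (Iv L) (\<lambda>x. g x * v0 x)"
    unfolding eqn by (intro tendsto_add lim_test \<phi>L2 gL2)
  moreover have "(\<lambda>n. integral\<^sup>L (Iv L) (\<lambda>x. a x * v x * deriv (\<psi>s n) x)) \<longlonglongrightarrow>
      integral\<^sup>L (Iv L) (\<lambda>x. a x * v x * v0 x)"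
    by (rule lim_test[OF av])
  ultimately have E0: "integral\<^sup>L (Iv L) (\<lambda>x. a x * v x * v0 x) = integral\<^sup>L (Iv L) (\<lambda>x. g x * v0 x)"
    using LIMSEQ_unique P0 by fastforce
  have gm: "g \<in> borel_measurable (Iv L)" using gL2 by (simp add: L2_def)
  have am': "(\<lambda>x. a x * v x) \<in> borel_measurable (Iv L)" using av by (simp add: L2_def)
  have E1: "integral\<^sup>L (Iv L) (\<lambda>x. a x * (v x)\<^sup>2) = integral\<^sup>L (Iv L) (\<lambda>x. a x * v x * v0 x)"
  proof (rule integral_cong_AE)
    show "(\<lambda>x. a x * (v x)\<^sup>2) \<in> borel_measurable (Iv L)" using am vm by measurable
    show "(\<lambda>x. a x * v x * v0 x) \<in> borel_measurable (Iv L)" using am vm v0m by measurable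
    show "AE x in Iv L. a x * (v x)\<^sup>2 = a x * v x * v0 x"
      using vv0 by eventually_elim (simp add: power2_eq_square)
  qed
  have E2: "integral\<^sup>L (Iv L) (\<lambda>x. g x * v0 x) = integral\<^sup>L (Iv L) (\<lambda>x. g x * v x)"
    by (rule integral_cong_AE) (use vv0 gm vm v0m in auto)
  have C1: "integral\<^sup>L (Iv L) (\<lambda>x. a x * (v x)\<^sup>2) = integral\<^sup>L (Iv L) (\<lambda>x. g x * v x)"
    using E0 E1 E2 by simp
  define Q where "Q = L2norm L v"
  define G where "G = L2norm L g"
  have Qsq: "Q\<^sup>2 = integral\<^sup>L (Iv L) (\<lambda>x. (v x)\<^sup>2)" unfolding Q_def L2norm_def by simp
  have Q0: "Q \<ge> 0" "G \<ge> 0" unfolding Q_def G_def L2norm_def by auto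
  have "\<alpha> * Q\<^sup>2 = integral\<^sup>L (Iv L) (\<lambda>x. \<alpha> * (v x)\<^sup>2)" using Qsq by simp
  also have "\<dots> \<le> integral\<^sup>L (Iv L) (\<lambda>x. a x * (v x)\<^sup>2)"
  proof (rule integral_mono_AE)
    show "integrable (Iv L) (\<lambda>x. \<alpha> * (v x)\<^sup>2)" using vL2 by (auto simp: L2_def)
    have "integrable (Iv L) (\<lambda>x. (a x * v x) * v x)" by (rule L2_mult_int[OF av vL2])
    then show "integrable (Iv L) (\<lambda>x. a x * (v x)\<^sup>2)" by (simp add: power2_eq_square mult.assoc)
    show "AE x in Iv L. \<alpha> * (v x)\<^sup>2 \<le> a x * (v x)\<^sup>2" using aB
      by eventually_elim (auto intro: mult_right_mono)
  qed
  also have "\<dots> = integral\<^sup>L (Iv L) (\<lambda>x. g x * v x)" by (rule C1)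
  also have "\<dots> \<le> \<bar>integral\<^sup>L (Iv L) (\<lambda>x. g x * v x)\<bar>" by simp
  also have "\<dots> \<le> G * Q" unfolding G_def Q_def L2norm_def
    by (rule CS) (use gL2 vL2 in \<open>auto simp: L2_def\<close>)
  finally have aq: "\<alpha> * Q\<^sup>2 \<le> G * Q" .
  have C2: "Q \<le> (1 / \<alpha>) * G"
  proof (cases "Q = 0")
    case True then show ?thesis using Q0 \<alpha>pos by simp
  next
    case False
    then have "Q > 0" using Q0 by simp
    then have "\<alpha> * Q \<le> G" using aq by (simp add: power2_eq_square)
    then show ?thesis using \<alpha>pos by (simp add: field_simps)
  qed
  have Kv: "K = sqrt L * Q"
  proof -
    have "integral\<^sup>L (Iv L) (\<lambda>t. (v0 t)\<^sup>2) = integral\<^sup>L (Iv L) (\<lambda>t. (v t)\<^sup>2)"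
      by (rule integral_cong_AE) (use vv0 vm v0m in auto)
    then show ?thesis unfolding K_def Q_def L2norm_def by simp
  qed
  have C3: "AE x in Iv L. \<bar>u x\<bar> \<le> sqrt L / \<alpha> * G"
    using u_U
  proof eventually_elim
    case (elim x)
    have "\<bar>u x\<bar> \<le> K" using U_bound[of x] elim by simp
    also have "\<dots> = sqrt L * Q" by (rule Kv)
    also have "\<dots> \<le> sqrt L * ((1 / \<alpha>) * G)" using C2 Lpos by (intro mult_left_mono) auto
    finally show ?case by simp
  qed
  show ?thesis using C1 C2 C3 unfolding Q_def G_def by blast
qed


end
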